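(* Let $n\ge1$, $p$ a prime dividing $n$, and $\prec$ any term order on the monomials of $\mathbb{C}[x_1,\ldots,x_n]$. Then $\mathrm{Sm}(\prec,B_i)=\mathrm{Min}(\prec)$ for each $0\le i\le p-1$.
   Context: $\omega_1=e^{2\pi i/p}$, $\omega_j=\omega_1^j$; $B=\{1,\omega_1,\ldots,\omega_{p-1}\}^n$, $B_j=\{(t_1,\ldots,t_n)\in B: t_1\cdots t_n=\omega_j\}$. $D=\{x_1^{u_1}\cdots x_n^{u_n}: 0\le u_i\le p-1\}$; on $D$, $x^u\equiv x^v$ iff there is $0\le k\le p-1$ with $u_i+k\equiv v_i\pmod p$ for all $i$. $\mathrm{Min}(\prec)$ is the set of monomials in $D$ that are the $\prec$-minimal element of their $\equiv$-class. $\mathrm{Sm}(\prec,X)$ is the set of monomials that are not the $\prec$-leading monomial of any nonzero polynomial vanishing on $X$. *)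

theory Defs
  imports Complex_Main "HOL-Computational_Algebra.Primes"
begin

(* Monomials of C[x_1,...,x_n] are represented by exponent vectors: nat lists of
length n (entry i is the exponent of x_(i+1)). *)

definition monomials :: "nat \<Rightarrow> nat list set" where
  "monomials n = {u. length u = n}"

definition mono_mult :: "nat list \<Rightarrow> nat list \<Rightarrow> nat list" where
  "mono_mult u v = map2 (+) u v"

definition term_order :: "nat \<Rightarrow> (nat list \<Rightarrow> nat list \<Rightarrow> bool) \<Rightarrow> bool" where
  "term_order n le \<longleftrightarrow>
     (\<forall>u\<in>monomials n. le u u) \<and>
     (\<forall>u\<in>monomials n. \<forall>v\<in>monomials n. le u v \<and> le v u \<longrightarrow> u = v) \<and>
     (\<forall>u\<in>monomials n. \<forall>v\<in>monomials n. \<forall>w\<in>monomials n. le u v \<and> le v w \<longrightarrow> le u w) \<and>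
     (\<forall>u\<in>monomials n. \<forall>v\<in>monomials n. le u v \<or> le v u) \<and>
     (\<forall>u\<in>monomials n. le (replicate n 0) u) \<and>
     (\<forall>u\<in>monomials n. \<forall>v\<in>monomials n. \<forall>w\<in>monomials n. le u v \<longrightarrow> le (mono_mult u w) (mono_mult v w))"

definition is_poly :: "nat \<Rightarrow> (nat list \<Rightarrow> complex) \<Rightarrow> bool" where
  "is_poly n f \<longleftrightarrow> finite {u. f u \<noteq> 0} \<and> {u. f u \<noteq> 0} \<subseteq> monomials n"

definition poly_supp :: "(nat list \<Rightarrow> complex) \<Rightarrow> nat list set" where
  "poly_supp f = {u. f u \<noteq> 0}"

definition mono_eval :: "nat list \<Rightarrow> complex list \<Rightarrow> complex" where
  "mono_eval u t = (\<Prod>i<length u. (t ! i) ^ (u ! i))"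

definition poly_eval :: "(nat list \<Rightarrow> complex) \<Rightarrow> complex list \<Rightarrow> complex" where
  "poly_eval f t = (\<Sum>u\<in>poly_supp f. f u * mono_eval u t)"

definition lead_mono :: "(nat list \<Rightarrow> nat list \<Rightarrow> bool) \<Rightarrow> (nat list \<Rightarrow> complex) \<Rightarrow> nat list" where
  "lead_mono le f = (THE u. u \<in> poly_supp f \<and> (\<forall>v\<in>poly_supp f. le v u))"

definition Sm :: "nat \<Rightarrow> (nat list \<Rightarrow> nat list \<Rightarrow> bool) \<Rightarrow> complex list set \<Rightarrow> nat list set" where
  "Sm n le X = {u \<in> monomials n. \<not> (\<exists>f. is_poly n f \<and> f \<noteq> (\<lambda>_. 0) \<and>
       (\<forall>t\<in>X. poly_eval f t = 0) \<and> lead_mono le f = u)}"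

definition D :: "nat \<Rightarrow> nat \<Rightarrow> nat list set" where
  "D n p = {u \<in> monomials n. \<forall>i<n. u ! i \<le> p - 1}"

definition mono_equiv :: "nat \<Rightarrow> nat \<Rightarrow> nat list \<Rightarrow> nat list \<Rightarrow> bool" where
  "mono_equiv n p u v \<longleftrightarrow> (\<exists>k\<le>p - 1. \<forall>i<n. (u ! i + k) mod p = v ! i mod p)"

definition Min_set :: "nat \<Rightarrow> nat \<Rightarrow> (nat list \<Rightarrow> nat list \<Rightarrow> bool) \<Rightarrow> nat list set" where
  "Min_set n p le = {u \<in> D n p. \<forall>v\<in>D n p. mono_equiv n p u v \<longrightarrow> le u v}"

definition omega :: "nat \<Rightarrow> nat \<Rightarrow> complex" where
  "omega p j = exp (2 * pi * \<i> * of_nat j / of_nat p)"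

definition Bset :: "nat \<Rightarrow> nat \<Rightarrow> complex list set" where
  "Bset n p = {t. length t = n \<and> (\<forall>i<n. t ! i \<in> omega p ` {0..<p})}"

definition Bj :: "nat \<Rightarrow> nat \<Rightarrow> nat \<Rightarrow> complex list set" where
  "Bj n p j = {t \<in> Bset n p. prod_list t = omega p j}"

end

theory Submission imports Defs "HOL-Analysis.Complex_Transcendental" begin

lemma prod_list_nth: "prod_list (xs::complex list) = (\<Prod>i<length xs. xs ! i)"
  by (induction xs) (auto simp: prod.lessThan_Suc_shift simp del: prod.lessThan_Suc)

lemma omega_pow: "omega p j = omega p 1 ^ j"
proof -
  have "2 * pi * \<i> * of_nat j / of_nat p = of_nat j * (2 * pi * \<i> * of_nat 1 / of_nat p)" by simp
  then show ?thesis unfolding omega_def by (metis exp_of_nat_mult)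
qed

lemma omega_p: assumes "p > 0" shows "omega p 1 ^ p = 1"
proof -
  have "omega p p = 1" unfolding omega_def using assms by simp
  then show ?thesis by (metis omega_pow)
qed

lemma pow_mod_eq: assumes "(z::complex) ^ p = 1" shows "z ^ m = z ^ (m mod p)"
proof -
  have "z ^ m = z ^ (m mod p + p * (m div p))" by simp
  also have "\<dots> = z ^ (m mod p) * (z ^ p) ^ (m div p)" by (metis power_add power_mult)
  finally show ?thesis using assms by simp
qed

lemma omega_pow_eq_1: assumes "p > 0" "omega p 1 ^ m = 1" shows "p dvd m"
proof -
  have "omega p m = 1" using assms(2) omega_pow[of p m] by metis
  then have "exp (2 * pi * \<i> * of_nat m / of_nat p) = 1" unfolding omega_def .
  moreover have eq: "2 * pi * \<i> * of_nat m / of_nat p = \<i> * complex_of_real (2*pi*real m/real p)"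
    by simp
  ultimately have "exp (\<i> * complex_of_real (2*pi*real m/real p)) = 1" by (simp only: eq)
  then obtain k :: int where k: "2*pi*real m/real p = of_int (2 * k) * pi"
    unfolding exp_eq_1 by auto
  then have "2*pi*real m = 2*pi*(real_of_int k * real p)" using assms(1) by (simp add: field_simps)
  then have "real m = real_of_int k * real p" by simp
  then have "int m = k * int p" by (metis of_int_eq_iff of_int_mult of_int_of_nat_eq)
  then have "int p dvd int m" by simp
  then show ?thesis by simp
qed

lemma Omega_iff: assumes "p > 0" shows "z \<in> omega p ` {0..<p} \<longleftrightarrow> (\<exists>j. z = omega p 1 ^ j)"
proof
  assume "z \<in> omega p ` {0..<p}" then show "\<exists>j. z = omega p 1 ^ j" using omega_pow by blast
next
  assume "\<exists>j. z = omega p 1 ^ j"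
  then obtain j where "z = omega p 1 ^ j" by blast
  then have "z = omega p 1 ^ (j mod p)" using pow_mod_eq[OF omega_p[OF assms], of j] by (simp only:)
  then have "z = omega p (j mod p)" using omega_pow[of p "j mod p"] by (simp only:)
  then show "z \<in> omega p ` {0..<p}" using assms by auto
qed

lemma TO_refl: "term_order n le \<Longrightarrow> u \<in> monomials n \<Longrightarrow> le u u"
  unfolding term_order_def by blast
lemma TO_antisym: "term_order n le \<Longrightarrow> u \<in> monomials n \<Longrightarrow> v \<in> monomials n \<Longrightarrow> le u v \<Longrightarrow> le v u \<Longrightarrow> u = v"
  unfolding term_order_def by blast
lemma TO_trans: "term_order n le \<Longrightarrow> u \<in> monomials n \<Longrightarrow> v \<in> monomials n \<Longrightarrow> w \<in> monomials n \<Longrightarrow> le u v \<Longrightarrow> le v w \<Longrightarrow> le u w"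
  unfolding term_order_def by blast
lemma TO_total: "term_order n le \<Longrightarrow> u \<in> monomials n \<Longrightarrow> v \<in> monomials n \<Longrightarrow> le u v \<or> le v u"
  unfolding term_order_def by blast
lemma TO_one: "term_order n le \<Longrightarrow> u \<in> monomials n \<Longrightarrow> le (replicate n 0) u"
  unfolding term_order_def by blast
lemma TO_mult: "term_order n le \<Longrightarrow> u \<in> monomials n \<Longrightarrow> v \<in> monomials n \<Longrightarrow> w \<in> monomials n \<Longrightarrow> le u v \<Longrightarrow> le (mono_mult u w) (mono_mult v w)"
  unfolding term_order_def by blast
lemma Omega_pow_closed:
  assumes "p > 0" "z \<in> omega p ` {0..<p}" shows "z * omega p 1 ^ k \<in> omega p ` {0..<p}"
proof -
  obtain j where "z = omega p 1 ^ j" using assms Omega_iff by blast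
  then have "z * omega p 1 ^ k = omega p 1 ^ (j + k)" by (simp add: power_add)
  then show ?thesis using Omega_iff[OF assms(1)] by blast
qed

lemma Omega_pow_p:
  assumes "p > 0" "z \<in> omega p ` {0..<p}" shows "z ^ p = 1"
proof -
  obtain j where "z = omega p 1 ^ j" using assms Omega_iff by blast
  then have "z ^ p = (omega p 1 ^ p) ^ j" by (metis power_mult mult.commute)
  then show ?thesis using omega_p[OF assms(1)] by simp
qed

lemma Bset_pow: assumes "p > 0" "t \<in> Bset n p" "k < n" shows "t ! k ^ p = 1"
  using assms Omega_pow_p unfolding Bset_def by blast

lemma Bj_len: "t \<in> Bj n p i \<Longrightarrow> length t = n"
  unfolding Bj_def Bset_def by auto

lemma mono_eval_add:
  assumes "length a = length t" "length b = length t"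
  shows "mono_eval a t * mono_eval b t = mono_eval (map2 (+) a b) t"
  unfolding mono_eval_def using assms
  by (simp add: prod.distrib[symmetric] power_add)

lemma mono_eval_cong_mod:
  assumes "length a = n" "length b = n" "\<forall>k<n. t ! k ^ p = 1" "\<forall>k<n. a ! k mod p = b ! k mod p"
  shows "mono_eval a t = mono_eval b t"
  unfolding mono_eval_def
proof (rule prod.cong)
  show "{..<length a} = {..<length b}" using assms by simp
next
  fix k assume "k \<in> {..<length b}"
  then have k: "k < n" using assms by simp
  have "t ! k ^ (a ! k) = t ! k ^ (a ! k mod p)" using pow_mod_eq assms(3) k by blast
  also have "\<dots> = t ! k ^ (b ! k mod p)" using assms(4) k by simp
  also have "\<dots> = t ! k ^ (b ! k)" using pow_mod_eq[of "t ! k" p "b ! k"] assms(3) k by simp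
  finally show "t ! k ^ (a ! k) = t ! k ^ (b ! k)" .
qed

lemma mono_eval_shift:
  assumes "length u = length t"
  shows "mono_eval (map (\<lambda>x. x + k) u) t = mono_eval u t * prod_list t ^ k"
  unfolding mono_eval_def prod_list_nth using assms
  by (simp add: power_add prod.distrib prod_power_distrib)

lemma mono_eval_zero: "mono_eval (replicate n 0) t = 1"
  unfolding mono_eval_def by simp

lemma mono_eval_upd:
  assumes "length a = length t" "j \<noteq> l" "j < length t" "l < length t"
  shows "mono_eval a (t[j := t ! j * x, l := t ! l * y]) = mono_eval a t * x ^ (a ! j) * y ^ (a ! l)"
proof -
  have "mono_eval a (t[j := t ! j * x, l := t ! l * y]) =
     (\<Prod>k<length a. t ! k ^ (a ! k) * ((if k = j then x ^ (a ! j) else 1) * (if k = l then y ^ (a ! l) else 1)))"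
    unfolding mono_eval_def
    by (rule prod.cong) (use assms in \<open>auto simp: nth_list_update power_mult_distrib\<close>)
  also have "\<dots> = mono_eval a t * ((\<Prod>k<length a. if k = j then x ^ (a ! j) else 1) * (\<Prod>k<length a. if k = l then y ^ (a ! l) else 1))"
    unfolding mono_eval_def by (simp add: prod.distrib)
  also have "\<dots> = mono_eval a t * x ^ (a ! j) * y ^ (a ! l)"
    using assms by simp
  finally show ?thesis .
qed
lemma exists_max:
  assumes to: "term_order n le" and "finite S" "S \<noteq> {}" "S \<subseteq> monomials n"
  shows "\<exists>u\<in>S. \<forall>v\<in>S. le v u"
  using assms(2,3,4)
proof (induction S rule: finite_ne_induct)
  case (singleton x) then show ?case using TO_refl[OF to] by auto
next
  case (insert x F)
  then obtain u where u: "u \<in> F" "\<forall>v\<in>F. le v u" by auto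
  have xm: "x \<in> monomials n" and um: "u \<in> monomials n" using insert u by auto
  show ?case
  proof (cases "le x u")
    case True then show ?thesis using u by auto
  next
    case False
    then have "le u x" using TO_total[OF to xm um] by blast
    then have "\<forall>v\<in>F. le v x" using u TO_trans[OF to _ um xm] insert.prems by blast
    then show ?thesis using TO_refl[OF to xm] by auto
  qed
qed

lemma lead_mono_eq:
  assumes to: "term_order n le" and "poly_supp f \<subseteq> monomials n" "u \<in> poly_supp f"
    "\<forall>v\<in>poly_supp f. le v u"
  shows "lead_mono le f = u"
  unfolding lead_mono_def
proof (rule the_equality)
  show "u \<in> poly_supp f \<and> (\<forall>v\<in>poly_supp f. le v u)" using assms by blast
next
  fix w assume "w \<in> poly_supp f \<and> (\<forall>v\<in>poly_supp f. le v w)"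
  then show "w = u" using assms TO_antisym[OF to, of w u] by blast
qed

lemma lead_mono_prop:
  assumes to: "term_order n le" and "is_poly n f" "f \<noteq> (\<lambda>_. 0)"
  shows "lead_mono le f \<in> poly_supp f \<and> (\<forall>v\<in>poly_supp f. le v (lead_mono le f))"
proof -
  have fin: "finite (poly_supp f)" and sub: "poly_supp f \<subseteq> monomials n"
    using assms unfolding is_poly_def poly_supp_def by auto
  have ne: "poly_supp f \<noteq> {}" using assms(3) unfolding poly_supp_def by auto
  obtain u where u: "u \<in> poly_supp f" "\<forall>v\<in>poly_supp f. le v u" using exists_max[OF to fin ne sub] by blast
  have "lead_mono le f = u" using lead_mono_eq[OF to sub u] .
  then show ?thesis using u by simp
qed

definition two :: "nat list \<Rightarrow> complex \<Rightarrow> nat list \<Rightarrow> complex \<Rightarrow> nat list \<Rightarrow> complex" where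
  "two u a v b = (\<lambda>w. if w = u then a else if w = v then b else 0)"

lemma two_supp: "u \<noteq> v \<Longrightarrow> a \<noteq> 0 \<Longrightarrow> b \<noteq> 0 \<Longrightarrow> poly_supp (two u a v b) = {u, v}"
  unfolding poly_supp_def two_def by auto

lemma two_facts:
  assumes to: "term_order n le" and "u \<noteq> v" "a \<noteq> 0" "b \<noteq> 0" "u \<in> monomials n" "v \<in> monomials n" "le v u"
  shows "is_poly n (two u a v b)" "two u a v b \<noteq> (\<lambda>_. 0)"
    "poly_eval (two u a v b) t = a * mono_eval u t + b * mono_eval v t"
    "lead_mono le (two u a v b) = u"
proof -
  have S: "poly_supp (two u a v b) = {u, v}" using two_supp assms by blast
  then show "is_poly n (two u a v b)" using assms unfolding is_poly_def poly_supp_def by auto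
  show "two u a v b \<noteq> (\<lambda>_. 0)" using assms(3) unfolding two_def by (metis)
  show "poly_eval (two u a v b) t = a * mono_eval u t + b * mono_eval v t"
    unfolding poly_eval_def S using assms(2) by (simp add: two_def)
  show "lead_mono le (two u a v b) = u"
    by (rule lead_mono_eq[OF to]) (use S assms TO_refl[OF to] in \<open>auto\<close>)
qed

lemma mono_mult_zero: "length r = n \<Longrightarrow> mono_mult (replicate n 0) r = r"
  unfolding mono_mult_def by (rule nth_equalityI) auto

lemma le_mono_mult:
  assumes to: "term_order n le" and "q \<in> monomials n" "r \<in> monomials n"
  shows "le r (mono_mult q r)"
proof -
  have "le (replicate n 0) q" using TO_one[OF to assms(2)] .
  moreover have "replicate n 0 \<in> monomials n" unfolding monomials_def by simp
  ultimately have "le (mono_mult (replicate n 0) r) (mono_mult q r)"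
    using TO_mult[OF to _ assms(2,3)] by blast
  then show ?thesis using mono_mult_zero[of r n] assms(3) unfolding monomials_def by simp
qed
lemma upd_in_Bj:
  assumes p: "p > 0" and t: "t \<in> Bj n p i" and "j < n" "l < n" "j \<noteq> l"
    and ab: "omega p 1 ^ a * omega p 1 ^ b = 1"
  shows "t[j := t ! j * omega p 1 ^ a, l := t ! l * omega p 1 ^ b] \<in> Bj n p i"
proof -
  let ?t = "t[j := t ! j * omega p 1 ^ a, l := t ! l * omega p 1 ^ b]"
  have len: "length t = n" using t by (rule Bj_len)
  have ent: "\<forall>k<n. t ! k \<in> omega p ` {0..<p}" and pr: "prod_list t = omega p i"
    using t unfolding Bj_def Bset_def by auto
  have "\<forall>k<n. ?t ! k \<in> omega p ` {0..<p}"
  proof (intro allI impI)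
    fix k assume k: "k < n"
    show "?t ! k \<in> omega p ` {0..<p}"
    proof (cases "k = l")
      case True then show ?thesis using Omega_pow_closed[OF p] ent assms len by simp
    next
      case False
      then show ?thesis
      proof (cases "k = j")
        case True then show ?thesis using Omega_pow_closed[OF p] ent assms len \<open>k \<noteq> l\<close> by simp
      next
        case False then show ?thesis using ent k \<open>k \<noteq> l\<close> by simp
      qed
    qed
  qed
  moreover have "prod_list ?t = prod_list t"
  proof -
    have "prod_list ?t = (\<Prod>k<n. t ! k * ((if k = j then omega p 1 ^ a else 1) * (if k = l then omega p 1 ^ b else 1)))"
      unfolding prod_list_nth using len assms by (intro prod.cong) (auto simp: nth_list_update)
    also have "\<dots> = prod_list t * ((\<Prod>k<n. if k = j then omega p 1 ^ a else 1) * (\<Prod>k<n. if k = l then omega p 1 ^ b else 1))"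
      unfolding prod_list_nth len by (simp add: prod.distrib)
    also have "\<dots> = prod_list t" using assms by simp
    finally show ?thesis .
  qed
  ultimately show ?thesis using len pr unfolding Bj_def Bset_def by simp
qed

lemma upd_inv:
  assumes "j \<noteq> l" "j < length t" "l < length t" "x * x' = (1::complex)" "y * y' = 1"
  shows "(t[j := t ! j * x, l := t ! l * y])[j := (t[j := t ! j * x, l := t ! l * y]) ! j * x',
          l := (t[j := t ! j * x, l := t ! l * y]) ! l * y'] = t"
  by (rule nth_equalityI) (use assms in \<open>auto simp: nth_list_update mult.assoc\<close>)

lemma mod_lemma:
  fixes X Y p :: nat
  assumes "p \<ge> 1" "p dvd X + (p - 1) * Y" shows "X mod p = Y mod p"
proof -
  obtain m where m: "X + (p - 1) * Y = p * m" using assms(2) by (auto elim: dvdE)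
  have "(p - 1) * Y + Y = p * Y" using assms(1) by (metis Suc_diff_1 less_le_trans mult_Suc zero_less_one add.commute)
  then have "X + p * Y = p * m + Y" using m by linarith
  then have "(X + p * Y) mod p = (p * m + Y) mod p" by simp
  then show ?thesis by simp
qed

lemma char_zero:
  assumes p: "p > 1" and len: "length a = n" and jl: "j < n" "l < n" and ne: "a ! j mod p \<noteq> a ! l mod p"
  shows "(\<Sum>t\<in>Bj n p i. mono_eval a t) = 0"
proof -
  define w where "w = omega p 1"
  have p0: "p > 0" using p by simp
  have jnl: "j \<noteq> l" using ne by auto
  have w1: "w ^ 1 * w ^ (p - 1) = 1" "w ^ (p - 1) * w ^ 1 = 1"
  proof -
    have "w ^ 1 * w ^ (p - 1) = w ^ Suc (p - 1)" by simp
    also have "\<dots> = w ^ p" using p0 by simp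
    finally have "w ^ 1 * w ^ (p - 1) = w ^ p" .
    then show "w ^ 1 * w ^ (p - 1) = 1" using omega_p[OF p0] unfolding w_def by simp
    then show "w ^ (p - 1) * w ^ 1 = 1" by (simp add: mult.commute)
  qed
  define B where "B = Bj n p i"
  define \<phi> where "\<phi> t = t[j := t ! j * w ^ 1, l := t ! l * w ^ (p - 1)]" for t
  define \<psi> where "\<psi> t = t[j := t ! j * w ^ (p - 1), l := t ! l * w ^ 1]" for t
  have \<phi>B: "\<phi> t \<in> B" if "t \<in> B" for t
    unfolding \<phi>_def B_def w_def using upd_in_Bj[OF p0 _ jl jnl] that w1 unfolding B_def w_def by blast
  have \<psi>B: "\<psi> t \<in> B" if "t \<in> B" for t
    unfolding \<psi>_def B_def w_def using upd_in_Bj[OF p0 _ jl jnl] that w1 unfolding B_def w_def by blast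
  have \<psi>\<phi>: "\<psi> (\<phi> t) = t" if "t \<in> B" for t
  proof -
    have "length t = n" using that Bj_len unfolding B_def by blast
    then show ?thesis unfolding \<psi>_def \<phi>_def using upd_inv[OF jnl, of t "w^1" "w^(p-1)" "w^(p-1)" "w^1"] w1 jl by simp
  qed
  have \<phi>\<psi>: "\<phi> (\<psi> t) = t" if "t \<in> B" for t
  proof -
    have "length t = n" using that Bj_len unfolding B_def by blast
    then show ?thesis unfolding \<psi>_def \<phi>_def using upd_inv[OF jnl, of t "w^(p-1)" "w^1" "w^1" "w^(p-1)"] w1 jl by simp
  qed
  define c where "c = (w ^ 1) ^ (a ! j) * (w ^ (p - 1)) ^ (a ! l)"
  have ev: "mono_eval a (\<phi> t) = mono_eval a t * c" if "t \<in> B" for t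
  proof -
    have "length t = n" using that Bj_len unfolding B_def by blast
    then show ?thesis unfolding \<phi>_def c_def using mono_eval_upd[of a t j l] len jl jnl by simp
  qed
  have "(\<Sum>t\<in>B. mono_eval a (\<phi> t)) = (\<Sum>t\<in>B. mono_eval a t)"
    by (rule sum.reindex_bij_witness[of B \<psi> \<phi>]) (use \<psi>\<phi> \<phi>B \<phi>\<psi> \<psi>B in auto)
  then have "(\<Sum>t\<in>B. mono_eval a t) * c = (\<Sum>t\<in>B. mono_eval a t)"
    using ev by (simp add: sum_distrib_right)
  moreover have "c \<noteq> 1"
  proof
    assume "c = 1"
    then have "omega p 1 ^ (a ! j + (p - 1) * a ! l) = 1"
      unfolding power_add power_mult c_def w_def power_one_right .
    then have "p dvd a ! j + (p - 1) * a ! l" using omega_pow_eq_1[OF p0] by blast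
    then show False using mod_lemma[of p] p ne by simp
  qed
  ultimately show ?thesis unfolding B_def by (metis mult.right_neutral mult_cancel_left)
qed
lemma Bj_finite: assumes "p > 0" shows "finite (Bj n p i)"
proof -
  have "Bj n p i \<subseteq> {t. set t \<subseteq> omega p ` {0..<p} \<and> length t = n}"
    unfolding Bj_def Bset_def by (auto simp: in_set_conv_nth)
  moreover have "finite {t. set t \<subseteq> omega p ` {0..<p} \<and> length t = n}"
    by (rule finite_lists_length_eq) simp
  ultimately show ?thesis by (rule finite_subset)
qed

lemma Bj_nonempty: assumes "n \<ge> 1" "i < p" shows "omega p i # replicate (n - 1) 1 \<in> Bj n p i"
proof -
  have o0: "omega p 0 = 1" unfolding omega_def by simp
  have "\<forall>k<n. (omega p i # replicate (n - 1) 1) ! k \<in> omega p ` {0..<p}"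
  proof (intro allI impI)
    fix k assume k: "k < n"
    show "(omega p i # replicate (n - 1) 1) ! k \<in> omega p ` {0..<p}"
    proof (cases k)
      case 0 then show ?thesis using assms by simp
    next
      case (Suc k') then have "(omega p i # replicate (n - 1) 1) ! k = 1" using k by simp
      then show ?thesis using o0 assms by (metis atLeastLessThan_iff image_eqI le0 le_less_trans zero_le)
    qed
  qed
  then show ?thesis unfolding Bj_def Bset_def using assms by simp
qed

lemma mod_lemma2:
  fixes U W p :: nat
  assumes "p \<ge> 1" shows "(U + (W + (p - 1) * U) mod p) mod p = W mod p"
proof -
  have "(p - 1) * U + U = p * U" using assms by (metis Suc_diff_1 less_le_trans mult_Suc zero_less_one add.commute)
  then have "U + (W + (p - 1) * U) = W + p * U" by linarith
  then show ?thesis by (metis mod_add_right_eq mod_mult_self2 mult.commute)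
qed

lemma mod_lemma3:
  fixes U p :: nat
  assumes "p \<ge> 1" shows "(U + (p - 1) * U) mod p = 0"
proof -
  have "(p - 1) * U + U = p * U" using assms by (metis Suc_diff_1 less_le_trans mult_Suc zero_less_one add.commute)
  then have "U + (p - 1) * U = p * U" by linarith
  then show ?thesis by simp
qed

theorem mainTheorem7:
  fixes n p i :: nat and le :: "nat list \<Rightarrow> nat list \<Rightarrow> bool"
  assumes "n \<ge> 1" and "prime p" and "p dvd n"
    and "term_order n le"
    and "i \<le> p - 1"
  shows "Sm n le (Bj n p i) = Min_set n p le"
proof -
  note to = assms(4)
  have p1: "p > 1" using assms(2) prime_gt_1_nat by blast
  then have p0: "p > 0" by simp
  have ip: "i < p" using assms(5) p1 by linarith
  define B where "B = Bj n p i"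
  have Blen: "length t = n" if "t \<in> B" for t using that Bj_len unfolding B_def by blast
  have Bpow: "t ! k ^ p = 1" if "t \<in> B" "k < n" for t k
    using Bset_pow[OF p0, of t n k] that unfolding B_def Bj_def by blast
  have Bprod: "prod_list t = omega p i" if "t \<in> B" for t using that unfolding B_def Bj_def by blast
  show ?thesis
  proof (intro equalityI subsetI)
    fix u assume uS: "u \<in> Sm n le (Bj n p i)"
    then have um: "u \<in> monomials n" unfolding Sm_def by blast
    have noF: "\<not> (is_poly n f \<and> f \<noteq> (\<lambda>_. 0) \<and> (\<forall>t\<in>B. poly_eval f t = 0) \<and> lead_mono le f = u)" for f
      using uS unfolding Sm_def B_def by blast
    have ulen: "length u = n" using um unfolding monomials_def by simp
    have uD: "u \<in> D n p"
    proof -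
      have "\<forall>l<n. u ! l \<le> p - 1"
      proof (rule ccontr)
        assume "\<not> (\<forall>l<n. u ! l \<le> p - 1)"
        then obtain l where l: "l < n" "u ! l \<ge> p" by force
        define v where "v = u[l := u ! l - p]"
        define e where "e = (replicate n 0)[l := p]"
        have vm: "v \<in> monomials n" and em: "e \<in> monomials n"
          unfolding v_def e_def monomials_def using ulen by auto
        have "mono_mult e v = u" unfolding mono_mult_def e_def v_def
          by (rule nth_equalityI) (use ulen l in \<open>auto simp: nth_list_update\<close>)
        then have lvu: "le v u" using le_mono_mult[OF to em vm] by simp
        have uv: "u \<noteq> v"
        proof
          assume "u = v"
          have "l < length u" using l ulen by simp
          then have "u ! l = u ! l - p" using \<open>u = v\<close> unfolding v_def by (metis nth_list_update_eq)
          then show False using l p0 by linarith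
        qed
        let ?f = "two u 1 v (-1)"
        have "\<forall>t\<in>B. poly_eval ?f t = 0"
        proof
          fix t assume t: "t \<in> B"
          have "mono_eval u t = mono_eval v t"
          proof (rule mono_eval_cong_mod[of u n v t p])
            show "\<forall>k<n. u ! k mod p = v ! k mod p"
            proof (intro allI impI)
              fix k assume "k < n"
              show "u ! k mod p = v ! k mod p"
              proof (cases "k = l")
                case True
                then have "v ! k = u ! l - p" unfolding v_def using l ulen by simp
                then show ?thesis using True l(2) by (metis le_mod_geq)
              next
                case False then show ?thesis unfolding v_def by simp
              qed
            qed
          qed (use ulen v_def Bpow t in auto)
          then show "poly_eval ?f t = 0" using two_facts(3)[OF to uv _ _ um vm lvu, of 1 "-1"] by simp
        qed
        then show False using noF[of ?f] two_facts[OF to uv _ _ um vm lvu, of 1 "-1"] by simp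
      qed
      then show ?thesis using um unfolding D_def by blast
    qed
    moreover have "\<forall>v\<in>D n p. mono_equiv n p u v \<longrightarrow> le u v"
    proof (intro ballI impI)
      fix v assume vD: "v \<in> D n p" and eq: "mono_equiv n p u v"
      show "le u v"
      proof (rule ccontr)
        assume nle: "\<not> le u v"
        have vm: "v \<in> monomials n" using vD unfolding D_def by blast
        have vlen: "length v = n" using vm unfolding monomials_def by simp
        have lvu: "le v u" using TO_total[OF to um vm] nle by blast
        have uv: "u \<noteq> v" using nle TO_refl[OF to um] by blast
        obtain k where k: "k \<le> p - 1" "\<forall>l<n. (u ! l + k) mod p = v ! l mod p"
          using eq unfolding mono_equiv_def by blast
        have a0: "omega p i ^ k \<noteq> 0" unfolding omega_def by simp
        let ?f = "two u (omega p i ^ k) v (-1)"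
        have "\<forall>t\<in>B. poly_eval ?f t = 0"
        proof
          fix t assume t: "t \<in> B"
          have "mono_eval v t = mono_eval (map (\<lambda>x. x + k) u) t"
            by (rule mono_eval_cong_mod[of v n _ t p]) (use vlen ulen k Bpow t in auto)
          also have "\<dots> = mono_eval u t * omega p i ^ k"
            using mono_eval_shift[of u t k] Blen[OF t] ulen Bprod[OF t] by simp
          finally show "poly_eval ?f t = 0"
            using two_facts(3)[OF to uv a0 _ um vm lvu, of "-1"] by simp
        qed
        then show False using noF[of ?f] two_facts[OF to uv a0 _ um vm lvu, of "-1"] by simp
      qed
    qed
    ultimately show "u \<in> Min_set n p le" unfolding Min_set_def by blast
  next
    fix u assume uM: "u \<in> Min_set n p le"
    then have uD: "u \<in> D n p" and umin: "\<forall>v\<in>D n p. mono_equiv n p u v \<longrightarrow> le u v"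
      unfolding Min_set_def by auto
    then have um: "u \<in> monomials n" unfolding D_def by blast
    have ulen: "length u = n" using um unfolding monomials_def by simp
    have "\<not> (\<exists>f. is_poly n f \<and> f \<noteq> (\<lambda>_. 0) \<and> (\<forall>t\<in>B. poly_eval f t = 0) \<and> lead_mono le f = u)"
    proof
      assume "\<exists>f. is_poly n f \<and> f \<noteq> (\<lambda>_. 0) \<and> (\<forall>t\<in>B. poly_eval f t = 0) \<and> lead_mono le f = u"
      then obtain f where fp: "is_poly n f" and fnz: "f \<noteq> (\<lambda>_. 0)" and fv: "\<forall>t\<in>B. poly_eval f t = 0"
        and fl: "lead_mono le f = u" by blast
      define S where "S = poly_supp f"
      have finS: "finite S" and subS: "S \<subseteq> monomials n"
        using fp unfolding is_poly_def poly_supp_def S_def by auto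
      have uS: "u \<in> S" and allS: "\<forall>w\<in>S. le w u"
        using lead_mono_prop[OF to fp fnz] fl unfolding S_def by auto
      define cu where "cu = map (\<lambda>x. (p - 1) * x) u"
      have culen: "length cu = n" unfolding cu_def using ulen by simp
      have "(\<Sum>t\<in>B. poly_eval f t * mono_eval cu t) = 0" using fv by simp
      moreover have "(\<Sum>t\<in>B. poly_eval f t * mono_eval cu t)
          = (\<Sum>w\<in>S. f w * (\<Sum>t\<in>B. mono_eval (map2 (+) w cu) t))"
      proof -
        have "poly_eval f t * mono_eval cu t = (\<Sum>w\<in>S. f w * mono_eval (map2 (+) w cu) t)" if t: "t \<in> B" for t
        proof -
          have "poly_eval f t * mono_eval cu t = (\<Sum>w\<in>S. f w * (mono_eval w t * mono_eval cu t))"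
            unfolding poly_eval_def S_def by (simp add: sum_distrib_right mult.assoc)
          also have "\<dots> = (\<Sum>w\<in>S. f w * mono_eval (map2 (+) w cu) t)"
          proof (rule sum.cong)
            fix w assume "w \<in> S"
            then have "length w = n" using subS unfolding monomials_def by auto
            then show "f w * (mono_eval w t * mono_eval cu t) = f w * mono_eval (map2 (+) w cu) t"
              using mono_eval_add[of w t cu] Blen[OF t] culen by simp
          qed simp
          finally show ?thesis .
        qed
        then have "(\<Sum>t\<in>B. poly_eval f t * mono_eval cu t) = (\<Sum>t\<in>B. \<Sum>w\<in>S. f w * mono_eval (map2 (+) w cu) t)"
          by (rule sum.cong[OF refl])
        also have "\<dots> = (\<Sum>w\<in>S. \<Sum>t\<in>B. f w * mono_eval (map2 (+) w cu) t)" by (rule sum.swap)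
        also have "\<dots> = (\<Sum>w\<in>S. f w * (\<Sum>t\<in>B. mono_eval (map2 (+) w cu) t))"
          by (simp add: sum_distrib_left)
        finally show ?thesis .
      qed
      moreover have "(\<Sum>w\<in>S. f w * (\<Sum>t\<in>B. mono_eval (map2 (+) w cu) t)) = f u * of_nat (card B)"
      proof -
        have other: "(\<Sum>t\<in>B. mono_eval (map2 (+) w cu) t) = 0" if w: "w \<in> S - {u}" for w
        proof -
          have wm: "w \<in> monomials n" using w subS by auto
          have wlen: "length w = n" using wm unfolding monomials_def by simp
          define a where "a = map2 (+) w cu"
          have alen: "length a = n" unfolding a_def using wlen culen by simp
          have anth: "a ! l = w ! l + (p - 1) * u ! l" if "l < n" for l
            unfolding a_def cu_def using that wlen ulen by simp
          show ?thesis
          proof (cases "\<exists>j l. j < n \<and> l < n \<and> a ! j mod p \<noteq> a ! l mod p")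
            case True
            then obtain j l where "j < n" "l < n" "a ! j mod p \<noteq> a ! l mod p" by blast
            then show ?thesis using char_zero[OF p1 alen] unfolding a_def B_def by blast
          next
            case False
            define c where "c = a ! 0 mod p"
            have n0: "0 < n" using assms(1) by simp
            have ac: "\<forall>l<n. a ! l mod p = c"
            proof (intro allI impI)
              fix l assume "l < n"
              then show "a ! l mod p = c" using False n0 unfolding c_def by blast
            qed
            define r where "r = map (\<lambda>x. x mod p) w"
            have rlen: "length r = n" unfolding r_def using wlen by simp
            have rm: "r \<in> monomials n" using rlen unfolding monomials_def by simp
            have "\<forall>l<n. r ! l \<le> p - 1"
            proof (intro allI impI)
              fix l assume "l < n"
              then have "r ! l = w ! l mod p" unfolding r_def using wlen by simp
              moreover have "w ! l mod p < p" using p0 by simp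
              ultimately show "r ! l \<le> p - 1" by linarith
            qed
            then have rD: "r \<in> D n p" unfolding D_def using rm by blast
            have "mono_equiv n p u r" unfolding mono_equiv_def
            proof (intro exI conjI allI impI)
              have "c < p" unfolding c_def using p0 by simp
              then show "c \<le> p - 1" by linarith
            next
              fix l assume l: "l < n"
              have "c = a ! l mod p" using ac l by simp
              also have "\<dots> = (w ! l + (p - 1) * u ! l) mod p" using anth[OF l] by simp
              finally have "c = (w ! l + (p - 1) * u ! l) mod p" .
              then show "(u ! l + c) mod p = r ! l mod p"
                using mod_lemma2[of p "u ! l" "w ! l"] p0 l wlen unfolding r_def by simp
            qed
            then have lur: "le u r" using umin rD by blast
            define q where "q = map (\<lambda>x. p * (x div p)) w"
            have qm: "q \<in> monomials n" unfolding q_def monomials_def using wlen by simp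
            have "mono_mult q r = w" unfolding mono_mult_def q_def r_def
            proof (rule nth_equalityI)
              show "length (map2 (+) (map (\<lambda>x. p * (x div p)) w) (map (\<lambda>x. x mod p) w)) = length w" by simp
            next
              fix k assume "k < length (map2 (+) (map (\<lambda>x. p * (x div p)) w) (map (\<lambda>x. x mod p) w))"
              then have "k < length w" by simp
              then show "map2 (+) (map (\<lambda>x. p * (x div p)) w) (map (\<lambda>x. x mod p) w) ! k = w ! k"
                by (simp add: mult_div_mod_eq)
            qed
            then have lrw: "le r w" using le_mono_mult[OF to qm rm] by simp
            have "le u w" using TO_trans[OF to um rm wm lur lrw] .
            moreover have "le w u" using allS w by blast
            ultimately have "w = u" using TO_antisym[OF to wm um] by blast
            then show ?thesis using w by blast
          qed
        qed
        have self: "(\<Sum>t\<in>B. mono_eval (map2 (+) u cu) t) = of_nat (card B)"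
        proof -
          have "mono_eval (map2 (+) u cu) t = 1" if t: "t \<in> B" for t
          proof -
            have "mono_eval (map2 (+) u cu) t = mono_eval (replicate n 0) t"
              by (rule mono_eval_cong_mod[of _ n _ t p])
                 (use ulen culen Bpow[OF t] p0 mod_lemma3[of p] in \<open>auto simp: cu_def\<close>)
            then show ?thesis by (simp add: mono_eval_zero)
          qed
          then show ?thesis by simp
        qed
        have "(\<Sum>w\<in>S. f w * (\<Sum>t\<in>B. mono_eval (map2 (+) w cu) t))
            = f u * (\<Sum>t\<in>B. mono_eval (map2 (+) u cu) t) + (\<Sum>w\<in>S - {u}. f w * (\<Sum>t\<in>B. mono_eval (map2 (+) w cu) t))"
          using sum.remove[OF finS uS] .
        also have "\<dots> = f u * of_nat (card B)" using other self by simp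
        finally show ?thesis .
      qed
      ultimately have "f u * of_nat (card B) = 0" by simp
      moreover have "f u \<noteq> 0" using uS unfolding S_def poly_supp_def by simp
      moreover have "card B \<noteq> 0"
        using Bj_finite[OF p0] Bj_nonempty[OF assms(1) ip] unfolding B_def by (metis card_0_eq empty_iff)
      ultimately show False by simp
    qed
    then show "u \<in> Sm n le (Bj n p i)" unfolding Sm_def B_def using um by blast
  qed
qed
end
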